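(* Let $n=1$ and let $\Omega\subset\mathbb{R}$ be a bounded interval with outward unit normal $\nu$. Assume that $\beta,\gamma$ are positive Hölder continuous functions on $\bar\Omega$, that $S_0,I_0$ are nonnegative continuous functions on $\bar\Omega$ with $I_0\not\equiv 0$ and $\int_\Omega(S_0+I_0)\,dx=N>0$, and let $d_S>0$. Let $r=\gamma/\beta$ and let $(S,I)$ be the nonnegative global solution of $$\partial_t S=d_S\Delta S-\beta SI+\gamma I \ (x\in\Omega,\ t>0),\quad \partial_t I=\beta SI-\gamma I\ (x\in\bar\Omega,\ t>0),\quad \partial_\nu S=0\ (x\in\partial\Omega,\ t>0),$$ $S(\cdot,0)=S_0$, $I(\cdot,0)=I_0$. Then $\|\nabla S(\cdot,t)\|_{L^2(\Omega)}\to0$ and $\int_\Omega\beta(S(x,t)-r(x))^2I(x,t)\,dx\to0$ as $t\to\infty$. *)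

theory Defs
  imports "HOL-Analysis.Analysis"
begin

definition hoelder_cont_on :: "real set \<Rightarrow> (real \<Rightarrow> real) \<Rightarrow> bool" where
  "hoelder_cont_on A f \<longleftrightarrow>
     (\<exists>\<alpha> C. 0 < \<alpha> \<and> \<alpha> \<le> 1 \<and> (\<forall>x\<in>A. \<forall>y\<in>A. \<bar>f x - f y\<bar> \<le> C * \<bar>x - y\<bar> powr \<alpha>))"

definition SIS_solution ::
  "real \<Rightarrow> real \<Rightarrow> real \<Rightarrow> (real \<Rightarrow> real) \<Rightarrow> (real \<Rightarrow> real) \<Rightarrow> (real \<Rightarrow> real) \<Rightarrow> (real \<Rightarrow> real)
   \<Rightarrow> (real \<Rightarrow> real \<Rightarrow> real) \<Rightarrow> (real \<Rightarrow> real \<Rightarrow> real) \<Rightarrow> bool" where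
  "SIS_solution a b dS \<beta> \<gamma> S0 I0 S I \<longleftrightarrow>
     continuous_on ({a..b} \<times> {0..}) (\<lambda>(x,t). S x t) \<and>
     continuous_on ({a..b} \<times> {0..}) (\<lambda>(x,t). I x t) \<and>
     (\<forall>x\<in>{a..b}. S x 0 = S0 x \<and> I x 0 = I0 x) \<and>
     (\<forall>x\<in>{a..b}. \<forall>t\<ge>0. S x t \<ge> 0 \<and> I x t \<ge> 0) \<and>
     (\<exists>Sx Sxx St.
        continuous_on ({a..b} \<times> {0<..}) (\<lambda>(x,t). Sx x t) \<and>
        continuous_on ({a..b} \<times> {0<..}) (\<lambda>(x,t). Sxx x t) \<and>
        continuous_on ({a<..<b} \<times> {0<..}) (\<lambda>(x,t). St x t) \<and>
        (\<forall>t>0. \<forall>x\<in>{a..b}.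
           ((\<lambda>y. S y t) has_real_derivative Sx x t) (at x within {a..b}) \<and>
           ((\<lambda>y. Sx y t) has_real_derivative Sxx x t) (at x within {a..b})) \<and>
        (\<forall>t>0. \<forall>x\<in>{a<..<b}.
           ((\<lambda>s. S x s) has_real_derivative St x t) (at t) \<and>
           St x t = dS * Sxx x t - \<beta> x * S x t * I x t + \<gamma> x * I x t) \<and>
        (\<forall>t>0. Sx a t = 0 \<and> Sx b t = 0)) \<and>
     (\<forall>t>0. \<forall>x\<in>{a..b}.
        ((\<lambda>s. I x s) has_real_derivative (\<beta> x * S x t * I x t - \<gamma> x * I x t)) (at t))"

end

theory Submission imports Defs begin

lemma hoelder_cont: assumes "hoelder_cont_on A f" shows "continuous_on A f"
proof -
  obtain \<alpha> C where a: "0 < \<alpha>" and h: "\<forall>x\<in>A. \<forall>y\<in>A. \<bar>f x - f y\<bar> \<le> C * \<bar>x - y\<bar> powr \<alpha>"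
    using assms unfolding hoelder_cont_on_def by blast
  show ?thesis unfolding continuous_on_def
  proof
    fix x assume x: "x \<in> A"
    have "((\<lambda>y. C * \<bar>y - x\<bar> powr \<alpha>) \<longlongrightarrow> C * 0) (at x within A)"
      by (intro tendsto_intros tendsto_zero_powrI[OF _ tendsto_const _ a])
         (auto intro!: tendsto_eq_intros)
    then have lim0: "((\<lambda>y. C * \<bar>y - x\<bar> powr \<alpha>) \<longlongrightarrow> 0) (at x within A)" by (simp only: mult_zero_right)
    have ev: "\<forall>\<^sub>F y in at x within A. norm (f y - f x) \<le> C * \<bar>y - x\<bar> powr \<alpha>"
      unfolding eventually_at_filter
    proof (intro always_eventually allI impI)
      fix y assume "y \<in> A"
      then have "\<bar>f y - f x\<bar> \<le> C * \<bar>y - x\<bar> powr \<alpha>" using h x by blast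
      then show "norm (f y - f x) \<le> C * \<bar>y - x\<bar> powr \<alpha>" by (simp only: real_norm_def)
    qed
    have "((\<lambda>y. f y - f x) \<longlongrightarrow> 0) (at x within A)"
      by (rule Lim_null_comparison[OF ev lim0])
    then show "(f \<longlongrightarrow> f x) (at x within A)"
      by (simp only: LIM_zero_iff)
  qed
qed

lemma cont_lift_fst:
  assumes "continuous_on A f" shows "continuous_on (A \<times> T) (\<lambda>p. f (fst p))"
  by (rule continuous_on_compose2[OF assms continuous_on_fst]) auto

lemma cont_slice_x:
  assumes "continuous_on (A \<times> T) (\<lambda>p. h (fst p) (snd p))" "t \<in> T"
  shows "continuous_on A (\<lambda>x. h x t)"
proof -
  have 1: "continuous_on A (\<lambda>x. (x, t))" by (intro continuous_intros)
  have 2: "(\<lambda>x. (x, t)) ` A \<subseteq> A \<times> T" using assms(2) by auto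
  from continuous_on_compose2[OF assms(1) 1 2] show ?thesis by simp
qed

lemma cont_slice_t:
  assumes "continuous_on (A \<times> T) (\<lambda>p. h (fst p) (snd p))" "x \<in> A"
  shows "continuous_on T (\<lambda>t. h x t)"
proof -
  have 1: "continuous_on T (\<lambda>t. (x, t))" by (intro continuous_intros)
  have 2: "(\<lambda>t. (x, t)) ` T \<subseteq> A \<times> T" using assms(2) by auto
  from continuous_on_compose2[OF assms(1) 1 2] show ?thesis by simp
qed

lemma cont_swap:
  assumes "continuous_on (A \<times> T) (\<lambda>p. h (fst p) (snd p))"
  shows "continuous_on (T \<times> A) (\<lambda>(t, x). h x t)"
proof -
  have 1: "continuous_on (T \<times> A) (\<lambda>p. (snd p, fst p))" by (intro continuous_intros)
  have 2: "(\<lambda>p. (snd p, fst p)) ` (T \<times> A) \<subseteq> A \<times> T" by auto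
  from continuous_on_compose2[OF assms(1) 1 2] show ?thesis by (simp add: case_prod_beta)
qed

lemma dini_mono_eps:
  fixes g :: "real \<Rightarrow> real"
  assumes cont: "continuous_on {t0..} g"
    and dini: "\<And>t e. t0 \<le> t \<Longrightarrow> 0 < e \<Longrightarrow> \<exists>\<delta>>0. \<forall>h. 0 < h \<and> h < \<delta> \<longrightarrow> g (t + h) \<le> g t + e * h"
    and st: "t0 \<le> s" "s \<le> u" and e: "0 < e"
  shows "g u \<le> g s + e * (u - s)"
proof -
  define P where "P = {\<tau> \<in> {s..u}. g \<tau> \<le> g s + e * (\<tau> - s)}"
  have cg: "continuous_on {s..u} g" by (rule continuous_on_subset[OF cont]) (use st in auto)
  have cP: "closed P" unfolding P_def
    by (rule continuous_on_closed_Collect_le[OF cg]) (auto intro!: continuous_intros)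
  have "bdd_above P" unfolding P_def by (rule bdd_aboveI[of _ u]) auto
  moreover have "s \<in> P" using st by (auto simp: P_def)
  then have "P \<noteq> {}" by auto
  ultimately have SP: "Sup P \<in> P" using closed_contains_Sup cP by blast
  define \<tau> where "\<tau> = Sup P"
  have \<tau>: "s \<le> \<tau>" "\<tau> \<le> u" "g \<tau> \<le> g s + e * (\<tau> - s)" using SP by (auto simp: P_def \<tau>_def)
  have up: "y \<le> \<tau>" if "y \<in> P" for y
    unfolding \<tau>_def by (rule cSup_upper[OF that \<open>bdd_above P\<close>])
  show ?thesis
  proof (cases "\<tau> = u")
    case True then show ?thesis using \<tau> by simp
  next
    case False
    then have \<tau>u: "\<tau> < u" using \<tau> by simp
    obtain \<delta> where d: "0 < \<delta>" and hd: "\<forall>h. 0 < h \<and> h < \<delta> \<longrightarrow> g (\<tau> + h) \<le> g \<tau> + e * h"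
      using dini[OF _ e, of \<tau>] \<tau> st by auto
    define h where "h = min (\<delta> / 2) (u - \<tau>)"
    have h: "0 < h" "h < \<delta>" "\<tau> + h \<le> u" using d \<tau>u by (auto simp: h_def)
    have "g (\<tau> + h) \<le> g \<tau> + e * h" using hd h by blast
    moreover have "e * (\<tau> + h - s) = e * (\<tau> - s) + e * h" by (simp add: algebra_simps)
    ultimately have "g (\<tau> + h) \<le> g s + e * (\<tau> + h - s)" using \<tau>(3) by linarith
    then have "\<tau> + h \<in> P" using h \<tau> by (auto simp: P_def)
    then have "\<tau> + h \<le> \<tau>" by (rule up)
    then show ?thesis using h by simp
  qed
qed

lemma dini_mono:
  fixes g :: "real \<Rightarrow> real"
  assumes cont: "continuous_on {t0..} g"
    and dini: "\<And>t e. t0 \<le> t \<Longrightarrow> 0 < e \<Longrightarrow> \<exists>\<delta>>0. \<forall>h. 0 < h \<and> h < \<delta> \<longrightarrow> g (t + h) \<le> g t + e * h"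
    and st: "t0 \<le> s" "s \<le> u"
  shows "g u \<le> g s"
proof (rule ccontr)
  assume "\<not> g u \<le> g s"
  then have pos: "0 < g u - g s" by simp
  define e where "e = (g u - g s) / (2 * (u - s + 1))"
  have e: "0 < e" using pos st by (simp add: e_def)
  have "g u \<le> g s + e * (u - s)" by (rule dini_mono_eps[OF cont dini st e])
  moreover have "e * (u - s) \<le> (g u - g s) / 2"
  proof -
    have "e * (u - s) \<le> e * (u - s + 1)" using e by simp
    also have "\<dots> = (g u - g s) / 2" using st by (simp add: e_def field_simps)
    finally show ?thesis .
  qed
  ultimately show False using pos field_sum_of_halves[of "g u - g s"] by linarith
qed

lemma deriv_right_bound:
  assumes "(f has_real_derivative l) (at t)" and e: "0 < e"
  shows "\<exists>\<delta>>0. \<forall>h. 0 < h \<and> h < \<delta> \<longrightarrow> f (t + h) \<le> f t + h * (l + e)"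
proof -
  have "((\<lambda>y. (f y - f t) / (y - t)) \<longlongrightarrow> l) (at t)"
    using assms(1) by (simp add: has_field_derivative_iff)
  then have "\<forall>\<^sub>F y in at t. dist ((f y - f t) / (y - t)) l < e" using e by (rule tendstoD)
  then obtain d where d: "0 < d" and hd: "\<And>y. y \<noteq> t \<Longrightarrow> dist y t < d \<Longrightarrow> dist ((f y - f t) / (y - t)) l < e"
    unfolding eventually_at by auto
  show ?thesis
  proof (intro exI[of _ d] conjI allI impI d)
    fix h :: real assume h: "0 < h \<and> h < d"
    then have "dist ((f (t + h) - f t) / (t + h - t)) l < e" by (intro hd) (auto simp: dist_real_def)
    then have "(f (t + h) - f t) / h < l + e" using h by (simp add: dist_real_def abs_less_iff)
    then have "f (t + h) - f t < (l + e) * h" using h by (simp add: pos_divide_less_eq)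
    moreover have "(l + e) * h = h * (l + e)" by (rule mult.commute)
    ultimately show "f (t + h) \<le> f t + h * (l + e)" by linarith
  qed
qed

locale sis =
  fixes a b dS :: real and \<beta> \<gamma> :: "real \<Rightarrow> real" and S I Sx Sxx :: "real \<Rightarrow> real \<Rightarrow> real"
  assumes ab: "a < b" and dSp: "0 < dS"
    and \<beta>c: "continuous_on {a..b} \<beta>" and \<gamma>c: "continuous_on {a..b} \<gamma>"
    and \<beta>p: "\<And>x. x \<in> {a..b} \<Longrightarrow> 0 < \<beta> x" and \<gamma>p: "\<And>x. x \<in> {a..b} \<Longrightarrow> 0 < \<gamma> x"
    and Sc: "continuous_on ({a..b} \<times> {0<..}) (\<lambda>p. S (fst p) (snd p))"
    and Ic: "continuous_on ({a..b} \<times> {0<..}) (\<lambda>p. I (fst p) (snd p))"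
    and Sxc: "continuous_on ({a..b} \<times> {0<..}) (\<lambda>p. Sx (fst p) (snd p))"
    and Sxxc: "continuous_on ({a..b} \<times> {0<..}) (\<lambda>p. Sxx (fst p) (snd p))"
    and Inn: "\<And>x t. x \<in> {a..b} \<Longrightarrow> 0 < t \<Longrightarrow> 0 \<le> I x t"
    and Sx_d: "\<And>x t. 0 < t \<Longrightarrow> x \<in> {a..b} \<Longrightarrow> ((\<lambda>y. S y t) has_real_derivative Sx x t) (at x within {a..b})"
    and Sxx_d: "\<And>x t. 0 < t \<Longrightarrow> x \<in> {a..b} \<Longrightarrow> ((\<lambda>y. Sx y t) has_real_derivative Sxx x t) (at x within {a..b})"
    and St_d: "\<And>x t. 0 < t \<Longrightarrow> x \<in> {a<..<b} \<Longrightarrow>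
        ((\<lambda>s. S x s) has_real_derivative (dS * Sxx x t - \<beta> x * S x t * I x t + \<gamma> x * I x t)) (at t)"
    and neu: "\<And>t. 0 < t \<Longrightarrow> Sx a t = 0 \<and> Sx b t = 0"
    and I_d: "\<And>x t. 0 < t \<Longrightarrow> x \<in> {a..b} \<Longrightarrow>
        ((\<lambda>s. I x s) has_real_derivative (\<beta> x * S x t * I x t - \<gamma> x * I x t)) (at t)"
begin

definition "r x = \<gamma> x / \<beta> x"
definition "G x t = \<beta> x * S x t * I x t - \<gamma> x * I x t"
definition "F x t = dS * Sxx x t - \<beta> x * S x t * I x t + \<gamma> x * I x t"

lemma r_pos: "x \<in> {a..b} \<Longrightarrow> 0 < r x"
  using \<beta>p \<gamma>p by (simp add: r_def)

lemma G_eq: "x \<in> {a..b} \<Longrightarrow> G x t = \<beta> x * I x t * (S x t - r x)"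
  using \<beta>p[of x] by (simp add: G_def r_def field_simps)

lemma F_eq: "F x t = dS * Sxx x t - G x t"
  by (simp add: F_def G_def)

lemma rc: "continuous_on {a..b} r"
proof -
  have "\<forall>x\<in>{a..b}. \<beta> x \<noteq> 0" using \<beta>p by (metis less_irrefl)
  then show ?thesis unfolding r_def by (intro continuous_intros \<beta>c \<gamma>c) auto
qed

lemma Fc: "continuous_on ({a..b} \<times> {0<..}) (\<lambda>p. F (fst p) (snd p))"
  unfolding F_def
  by (intro continuous_intros Sc Ic Sxxc cont_lift_fst \<beta>c \<gamma>c)

lemma Gc: "continuous_on ({a..b} \<times> {0<..}) (\<lambda>p. G (fst p) (snd p))"
  unfolding G_def
  by (intro continuous_intros Sc Ic cont_lift_fst \<beta>c \<gamma>c)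

lemma S_d_int: "0 < t \<Longrightarrow> x \<in> {a<..<b} \<Longrightarrow> ((\<lambda>s. S x s) has_real_derivative F x t) (at t)"
  unfolding F_def by (rule St_d)

lemma S_incr_bounds:
  assumes x: "x \<in> {a..b}" and t: "0 < t1" "t1 \<le> t2" and d: "0 < \<delta>"
    and bnd: "\<And>y s. y \<in> {a<..<b} \<Longrightarrow> \<bar>y - x\<bar> < \<delta> \<Longrightarrow> s \<in> {t1..t2} \<Longrightarrow> lo \<le> F y s \<and> F y s \<le> hi"
  shows "lo * (t2 - t1) \<le> S x t2 - S x t1 \<and> S x t2 - S x t1 \<le> hi * (t2 - t1)"
proof -
  have iy: "lo * (t2 - t1) \<le> S y t2 - S y t1 \<and> S y t2 - S y t1 \<le> hi * (t2 - t1)"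
    if y: "y \<in> {a<..<b}" "\<bar>y - x\<bar> < \<delta>" for y
  proof (cases "t1 = t2")
    case True then show ?thesis by simp
  next
    case False
    then have "t1 < t2" using t by simp
    from MVT2[OF this, of "\<lambda>s. S y s" "F y"] obtain z where z: "t1 < z" "z < t2"
      and eq: "S y t2 - S y t1 = (t2 - t1) * F y z"
      using S_d_int[OF _ y(1)] t by force
    have "lo \<le> F y z \<and> F y z \<le> hi" using bnd[OF y, of z] z by simp
    then show ?thesis unfolding eq using \<open>t1 < t2\<close>
      by (simp add: mult.commute mult_right_mono)
  qed
  have c: "continuous_on {a..b} (\<lambda>y. S y t2 - S y t1)"
    using t by (intro continuous_intros cont_slice_x[OF Sc]) auto
  then have lim: "((\<lambda>y. S y t2 - S y t1) \<longlongrightarrow> S x t2 - S x t1) (at x within {a<..<b})"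
    using x by (meson continuous_on_def greaterThanLessThan_subseteq_atLeastAtMost_iff order_refl tendsto_within_subset)
  have nb: "at x within {a<..<b} \<noteq> bot"
    using x ab by (metis closure_greaterThanLessThan islimpt_Icc limpt_of_closure trivial_limit_within)
  have ev: "\<forall>\<^sub>F y in at x within {a<..<b}. y \<in> {a<..<b} \<and> \<bar>y - x\<bar> < \<delta>"
    unfolding eventually_at using d by (auto simp: dist_real_def)
  show ?thesis
  proof
    show "lo * (t2 - t1) \<le> S x t2 - S x t1"
      by (rule tendsto_lowerbound[OF lim eventually_mono[OF ev] nb]) (use iy in blast)
    show "S x t2 - S x t1 \<le> hi * (t2 - t1)"
      by (rule tendsto_upperbound[OF lim eventually_mono[OF ev] nb]) (use iy in blast)
  qed
qed

lemma S_d: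
  assumes x: "x \<in> {a..b}" and t: "0 < t"
  shows "((\<lambda>s. S x s) has_real_derivative F x t) (at t)"
  unfolding has_field_derivative_iff tendsto_iff
proof (intro allI impI)
  fix e :: real assume e: "0 < e"
  have xt: "(x, t) \<in> {a..b} \<times> {0<..}" using x t by auto
  obtain d0 where d0: "0 < d0" and hd0: "\<And>p. p \<in> {a..b} \<times> {0<..} \<Longrightarrow> dist p (x, t) < d0 \<Longrightarrow>
      dist (F (fst p) (snd p)) (F x t) < e / 2"
    using Fc xt e unfolding continuous_on_iff by (metis fst_conv half_gt_zero snd_conv)
  define d where "d = min (d0 / 2) (t / 2)"
  have d: "0 < d" using d0 t by (simp add: d_def)
  have bnd: "F x t - e / 2 \<le> F y s \<and> F y s \<le> F x t + e / 2"
    if "y \<in> {a<..<b}" "\<bar>y - x\<bar> < d" "\<bar>s - t\<bar> \<le> d" for y s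
  proof -
    have "\<bar>s - t\<bar> \<le> t / 2" using that d_def by auto
    then have sp: "0 < s" using t abs_ge_minus_self[of "s - t"] by linarith
    have "dist (y, s) (x, t) \<le> \<bar>y - x\<bar> + \<bar>s - t\<bar>"
      unfolding dist_Pair_Pair dist_real_def by (rule sqrt_sum_squares_le_sum) auto
    also have "\<dots> < d0" using that d_def by auto
    finally have "dist (F y s) (F x t) < e / 2"
      using hd0[of "(y, s)"] that sp by auto
    then show ?thesis unfolding dist_real_def by (simp only: abs_less_iff) linarith
  qed
  show "\<forall>\<^sub>F s in at t. dist ((S x s - S x t) / (s - t)) (F x t) < e"
    unfolding eventually_at
  proof (intro exI[of _ d] conjI ballI impI)
    fix s assume s: "s \<noteq> t \<and> dist s t < d"
    show "dist ((S x s - S x t) / (s - t)) (F x t) < e"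
    proof (cases "t < s")
      case True
      have "(F x t - e/2) * (s - t) \<le> S x s - S x t \<and> S x s - S x t \<le> (F x t + e/2) * (s - t)"
      proof (rule S_incr_bounds[OF x t _ d])
        show "t \<le> s" using True by simp
        fix y \<sigma> assume y: "y \<in> {a<..<b}" "\<bar>y - x\<bar> < d" and "\<sigma> \<in> {t..s}"
        then have "\<bar>\<sigma> - t\<bar> \<le> d" using s unfolding dist_real_def abs_le_iff by auto
        then show "F x t - e / 2 \<le> F y \<sigma> \<and> F y \<sigma> \<le> F x t + e / 2" by (rule bnd[OF y])
      qed
      then have "F x t - e/2 \<le> (S x s - S x t) / (s - t) \<and> (S x s - S x t) / (s - t) \<le> F x t + e/2"
        using True by (simp add: pos_le_divide_eq pos_divide_le_eq)
      then show ?thesis using e unfolding dist_real_def abs_less_iff by linarith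
    next
      case False
      then have ts: "s < t" using s by auto
      have "\<bar>s - t\<bar> < t / 2" using s d_def by (auto simp: dist_real_def)
      then have sp: "0 < s" using abs_ge_minus_self[of "s - t"] by linarith
      have "(F x t - e/2) * (t - s) \<le> S x t - S x s \<and> S x t - S x s \<le> (F x t + e/2) * (t - s)"
      proof (rule S_incr_bounds[OF x sp _ d])
        show "s \<le> t" using ts by simp
        fix y \<sigma> assume y: "y \<in> {a<..<b}" "\<bar>y - x\<bar> < d" and "\<sigma> \<in> {s..t}"
        then have "\<bar>\<sigma> - t\<bar> \<le> d" using s unfolding dist_real_def abs_le_iff by auto
        then show "F x t - e / 2 \<le> F y \<sigma> \<and> F y \<sigma> \<le> F x t + e / 2" by (rule bnd[OF y])
      qed
      moreover have "(S x s - S x t) / (s - t) = (S x t - S x s) / (t - s)"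
        by (metis minus_diff_eq minus_divide_divide)
      ultimately have "F x t - e/2 \<le> (S x s - S x t) / (s - t) \<and> (S x s - S x t) / (s - t) \<le> F x t + e/2"
        using ts by (simp add: pos_le_divide_eq pos_divide_le_eq)
      then show ?thesis using e unfolding dist_real_def abs_less_iff by linarith
    qed
  qed (rule d)
qed

lemma S_mvt_x:
  assumes "a \<le> x1" "x1 < x2" "x2 \<le> b" "0 < t"
  shows "\<exists>\<xi>\<in>{x1<..<x2}. S x2 t - S x1 t = Sx \<xi> t * (x2 - x1)"
proof -
  have "\<exists>\<xi>\<in>{x1<..<x2}. S x2 t - S x1 t = (*) (Sx \<xi> t) (x2 - x1)"
  proof (rule mvt_simple[OF assms(2)])
    fix \<xi> assume "x1 \<le> \<xi>" "\<xi> \<le> x2"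
    then have "((\<lambda>y. S y t) has_real_derivative Sx \<xi> t) (at \<xi> within {a..b})"
      using assms by (intro Sx_d) auto
    then have "((\<lambda>y. S y t) has_real_derivative Sx \<xi> t) (at \<xi> within {x1..x2})"
      by (rule DERIV_subset) (use assms in auto)
    then show "((\<lambda>y. S y t) has_derivative (*) (Sx \<xi> t)) (at \<xi> within {x1..x2})"
      by (simp add: has_field_derivative_def)
  qed
  then show ?thesis by simp
qed

lemma Sx_max:
  assumes t: "0 < t" and x: "x \<in> {a..b}" and mx: "\<forall>y\<in>{a..b}. S y t \<le> S x t"
  shows "Sx x t = 0"
proof -
  consider "x = a" | "x = b" | "a < x" "x < b" using x by fastforce
  then show ?thesis
  proof cases
    case 3
    have "((\<lambda>y. S y t) has_real_derivative Sx x t) (at x within {a..b})" using Sx_d t x by blast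
    then have d: "((\<lambda>y. S y t) has_real_derivative Sx x t) (at x)" using at_within_Icc_at[OF 3] by simp
    show ?thesis
    proof (rule DERIV_local_max[OF d, of "min (x - a) (b - x)"])
      show "0 < min (x - a) (b - x)" using 3 by simp
      show "\<forall>y. \<bar>x - y\<bar> < min (x - a) (b - x) \<longrightarrow> S y t \<le> S x t"
        using mx by (auto simp: abs_less_iff)
    qed
  qed (use neu t in auto)
qed

lemma Sxx_max:
  assumes t: "0 < t" and x: "x \<in> {a..b}" and mx: "\<forall>y\<in>{a..b}. S y t \<le> S x t"
  shows "Sxx x t \<le> 0"
proof (rule ccontr)
  assume "\<not> Sxx x t \<le> 0"
  then have pos: "0 < Sxx x t" by simp
  have sx0: "Sx x t = 0" by (rule Sx_max[OF t x mx])
  have "((\<lambda>y. (Sx y t - Sx x t) / (y - x)) \<longlongrightarrow> Sxx x t) (at x within {a..b})"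
    using Sxx_d[OF t x] by (simp add: has_field_derivative_iff)
  from order_tendstoD(1)[OF this pos]
  obtain d where d: "0 < d" and hd: "\<And>y. y \<in> {a..b} \<Longrightarrow> y \<noteq> x \<Longrightarrow> dist y x < d \<Longrightarrow> 0 < Sx y t / (y - x)"
    unfolding eventually_at sx0 by auto
  show False
  proof (cases "x < b")
    case True
    define y0 where "y0 = min (x + d / 2) b"
    have y0: "x < y0" "y0 \<le> b" using True d by (auto simp: y0_def)
    obtain \<xi> where \<xi>: "\<xi> \<in> {x<..<y0}" and eq: "S y0 t - S x t = Sx \<xi> t * (y0 - x)"
      using S_mvt_x[of x y0 t] x y0 t by auto
    have "0 < Sx \<xi> t / (\<xi> - x)" using \<xi> x y0 d by (intro hd) (auto simp: y0_def dist_real_def)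
    then have "0 < Sx \<xi> t" using \<xi> by (simp add: zero_less_divide_iff)
    then have "0 < Sx \<xi> t * (y0 - x)" using y0 by simp
    then have "S x t < S y0 t" using eq by linarith
    moreover have "S y0 t \<le> S x t" using mx y0 x by auto
    ultimately show False by simp
  next
    case False
    then have xb: "x = b" using x by auto
    define y0 where "y0 = max (x - d / 2) a"
    have y0: "y0 < x" "a \<le> y0" using ab xb d by (auto simp: y0_def)
    obtain \<xi> where \<xi>: "\<xi> \<in> {y0<..<x}" and eq: "S x t - S y0 t = Sx \<xi> t * (x - y0)"
      using S_mvt_x[of y0 x t] x y0 t by auto
    have "0 < Sx \<xi> t / (\<xi> - x)" using \<xi> x y0 d by (intro hd) (auto simp: y0_def dist_real_def)
    then have "Sx \<xi> t < 0" using \<xi> by (simp add: zero_less_divide_iff)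
    then have "Sx \<xi> t * (x - y0) < 0" using y0 by (simp add: mult_neg_pos)
    then have "S x t < S y0 t" using eq by linarith
    moreover have "S y0 t \<le> S x t" using mx y0 x by auto
    ultimately show False by simp
  qed
qed

lemma max_principle_eps:
  assumes K: "\<And>x. x \<in> {a..b} \<Longrightarrow> S x 1 \<le> K \<and> r x \<le> K" and e: "0 < e"
    and x1: "x1 \<in> {a..b}" and t1: "1 \<le> t1"
  shows "S x1 t1 < K + e * t1"
proof (rule ccontr)
  assume "\<not> S x1 t1 < K + e * t1"
  then have h1: "K + e * t1 \<le> S x1 t1" by simp
  define Bx where "Bx = {a..b} \<times> {1..t1}"
  define P where "P = {p \<in> Bx. K + e * snd p \<le> S (fst p) (snd p)}"
  have cB: "continuous_on Bx (\<lambda>p. S (fst p) (snd p))"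
    by (rule continuous_on_subset[OF Sc]) (auto simp: Bx_def)
  have "closed P" unfolding P_def
  proof (rule continuous_on_closed_Collect_le[OF _ cB])
    show "continuous_on Bx (\<lambda>p. K + e * snd p)" by (intro continuous_intros)
    show "closed Bx" unfolding Bx_def by (intro closed_Times closed_atLeastAtMost)
  qed
  moreover have "compact Bx" unfolding Bx_def by (intro compact_Times compact_Icc)
  moreover have "P = Bx \<inter> P" unfolding P_def by blast
  ultimately have "compact P" by (metis compact_Int_closed)
  then have cP: "compact (snd ` P)" by (intro compact_continuous_image continuous_intros)
  have "(x1, t1) \<in> P" using x1 t1 h1 by (auto simp: P_def Bx_def)
  then have "snd ` P \<noteq> {}" by auto
  from compact_attains_inf[OF cP this] obtain \<tau> where \<tau>P: "\<tau> \<in> snd ` P"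
    and \<tau>min: "\<And>s. s \<in> snd ` P \<Longrightarrow> \<tau> \<le> s" by blast
  from \<tau>P obtain x\<tau> where "(x\<tau>, \<tau>) \<in> P" by force
  then have x\<tau>: "x\<tau> \<in> {a..b}" and \<tau>1: "1 \<le> \<tau>" and \<tau>t1: "\<tau> \<le> t1" and h\<tau>: "K + e * \<tau> \<le> S x\<tau> \<tau>"
    by (auto simp: P_def Bx_def)
  have below: "S y s < K + e * s" if "y \<in> {a..b}" "1 \<le> s" "s < \<tau>" for y s
  proof (rule ccontr)
    assume "\<not> S y s < K + e * s"
    then have "(y, s) \<in> P" using that \<tau>t1 by (auto simp: P_def Bx_def)
    then have "\<tau> \<le> s" using \<tau>min by force
    then show False using that by simp
  qed
  have "\<tau> \<noteq> 1"
  proof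
    assume "\<tau> = 1"
    then have "K + e \<le> S x\<tau> 1" using h\<tau> by simp
    then show False using K[OF x\<tau>] e by simp
  qed
  then have \<tau>gt: "1 < \<tau>" using \<tau>1 by simp
  have "\<exists>xm\<in>{a..b}. \<forall>y\<in>{a..b}. S y \<tau> \<le> S xm \<tau>"
    by (rule continuous_attains_sup) (use ab \<tau>gt in \<open>auto intro!: cont_slice_x[OF Sc]\<close>)
  then obtain xm where xm: "xm \<in> {a..b}" and mx: "\<forall>y\<in>{a..b}. S y \<tau> \<le> S xm \<tau>" by blast
  have hm: "K + e * \<tau> \<le> S xm \<tau>" using h\<tau> mx x\<tau> by force
  have "Sxx xm \<tau> \<le> 0" by (rule Sxx_max[OF _ xm mx]) (use \<tau>gt in simp)
  moreover have "0 \<le> G xm \<tau>"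
  proof -
    have "r xm \<le> S xm \<tau>" using K[OF xm] hm e \<tau>gt by (smt (verit) mult_pos_pos)
    then show ?thesis unfolding G_eq[OF xm]
      using \<beta>p[OF xm] Inn[OF xm, of \<tau>] \<tau>gt by simp
  qed
  moreover have "dS * Sxx xm \<tau> \<le> 0" using calculation(1) dSp by (simp add: mult_nonneg_nonpos)
  ultimately have Fle: "F xm \<tau> \<le> 0" unfolding F_eq by linarith
  have "((\<lambda>s. (S xm s - S xm \<tau>) / (s - \<tau>)) \<longlongrightarrow> F xm \<tau>) (at \<tau>)"
    using S_d[OF xm] \<tau>gt by (simp add: has_field_derivative_iff)
  then have lim: "((\<lambda>s. (S xm s - S xm \<tau>) / (s - \<tau>)) \<longlongrightarrow> F xm \<tau>) (at_left \<tau>)"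
    by (rule tendsto_mono[rotated]) (simp add: at_le)
  have "\<forall>\<^sub>F s in at_left \<tau>. e \<le> (S xm s - S xm \<tau>) / (s - \<tau>)"
    using eventually_at_left_real[OF \<tau>gt]
  proof (rule eventually_mono)
    fix s assume s: "s \<in> {1<..<\<tau>}"
    have "S xm s < K + e * s" using below[OF xm] s by auto
    then have "e * (\<tau> - s) \<le> S xm \<tau> - S xm s" using hm by (simp add: algebra_simps)
    then have "e \<le> (S xm \<tau> - S xm s) / (\<tau> - s)" using s by (simp add: pos_le_divide_eq)
    also have "(S xm \<tau> - S xm s) / (\<tau> - s) = (S xm s - S xm \<tau>) / (s - \<tau>)"
      by (metis minus_diff_eq minus_divide_divide)
    finally show "e \<le> (S xm s - S xm \<tau>) / (s - \<tau>)" .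
  qed
  from tendsto_lowerbound[OF lim this] have "e \<le> F xm \<tau>" by simp
  then show False using Fle e by simp
qed

lemma max_principle:
  assumes K: "\<And>x. x \<in> {a..b} \<Longrightarrow> S x 1 \<le> K \<and> r x \<le> K"
    and x: "x \<in> {a..b}" and t: "1 \<le> t"
  shows "S x t \<le> K"
proof (rule ccontr)
  assume "\<not> S x t \<le> K"
  then have "0 < (S x t - K) / (2 * t)" using t by simp
  from max_principle_eps[OF K this x t] have "S x t < K + (S x t - K) / 2" using t by simp
  then show False using \<open>\<not> S x t \<le> K\<close> by (simp add: field_simps)
qed

lemma sl:
  assumes "0 < t"
  shows "continuous_on {a..b} (\<lambda>x. S x t)" "continuous_on {a..b} (\<lambda>x. I x t)"
    "continuous_on {a..b} (\<lambda>x. Sx x t)" "continuous_on {a..b} (\<lambda>x. Sxx x t)"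
    "continuous_on {a..b} (\<lambda>x. F x t)" "continuous_on {a..b} (\<lambda>x. G x t)"
  using assms by (auto intro!: cont_slice_x[OF Sc] cont_slice_x[OF Ic] cont_slice_x[OF Sxc]
      cont_slice_x[OF Sxxc] cont_slice_x[OF Fc] cont_slice_x[OF Gc])

lemma ibp:
  assumes t: "0 < t" and ud: "\<And>x. x \<in> {a..b} \<Longrightarrow> (u has_real_derivative u' x) (at x within {a..b})"
    and uc: "continuous_on {a..b} u" and u'c: "continuous_on {a..b} u'"
  shows "integral {a..b} (\<lambda>x. Sx x t * u' x) = - integral {a..b} (\<lambda>x. Sxx x t * u x)"
proof -
  have "((\<lambda>x. Sx x t * u' x + Sxx x t * u x) has_integral (Sx b t * u b - Sx a t * u a)) {a..b}"
  proof (rule fundamental_theorem_of_calculus)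
    show "a \<le> b" using ab by simp
    fix x assume x: "x \<in> {a..b}"
    have "((\<lambda>x. Sx x t * u x) has_real_derivative Sx x t * u' x + Sxx x t * u x) (at x within {a..b})"
      using DERIV_mult'[OF Sxx_d[OF t x] ud[OF x]] .
    then show "((\<lambda>x. Sx x t * u x) has_vector_derivative Sx x t * u' x + Sxx x t * u x) (at x within {a..b})"
      by (simp add: has_real_derivative_iff_has_vector_derivative)
  qed
  then have "integral {a..b} (\<lambda>x. Sx x t * u' x + Sxx x t * u x) = 0"
    using neu[OF t] by (simp add: integral_unique)
  moreover have "integral {a..b} (\<lambda>x. Sx x t * u' x + Sxx x t * u x) =
      integral {a..b} (\<lambda>x. Sx x t * u' x) + integral {a..b} (\<lambda>x. Sxx x t * u x)"
    by (intro integral_add integrable_continuous_real continuous_intros sl t uc u'c)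
  ultimately show ?thesis by simp
qed

definition "A t = integral {a..b} (\<lambda>x. (Sx x t)\<^sup>2)"
definition "B t = integral {a..b} (\<lambda>x. \<beta> x * (S x t - r x)\<^sup>2 * I x t)"
definition "D t = dS * A t + B t"
definition "L t = integral {a..b} (\<lambda>x. S x t * S x t / 2 + r x * I x t)"

lemma A_nonneg: assumes t: "0 < t" shows "0 \<le> A t"
  unfolding A_def
proof (rule integral_nonneg)
  show "(\<lambda>x. (Sx x t)\<^sup>2) integrable_on {a..b}"
    by (intro integrable_continuous_real continuous_intros sl[OF t])
qed simp

lemma B_nonneg: assumes t: "0 < t" shows "0 \<le> B t"
  unfolding B_def
proof (rule integral_nonneg)
  show "(\<lambda>x. \<beta> x * (S x t - r x)\<^sup>2 * I x t) integrable_on {a..b}"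
    by (intro integrable_continuous_real continuous_intros sl[OF t] \<beta>c rc)
  fix x assume x: "x \<in> {a..b}"
  show "0 \<le> \<beta> x * (S x t - r x)\<^sup>2 * I x t" using \<beta>p[OF x] Inn[OF x t] by simp
qed

lemma L_nonneg: assumes t: "0 < t" shows "0 \<le> L t"
  unfolding L_def
proof (rule integral_nonneg)
  show "(\<lambda>x. S x t * S x t / 2 + r x * I x t) integrable_on {a..b}"
    by (intro integrable_continuous_real continuous_intros sl[OF t] rc) simp
  fix x assume x: "x \<in> {a..b}"
  show "0 \<le> S x t * S x t / 2 + r x * I x t" using r_pos[OF x] Inn[OF x t] by simp
qed

lemma D_nonneg: "0 < t \<Longrightarrow> 0 \<le> D t"
  unfolding D_def using A_nonneg B_nonneg dSp by simp

lemma B_le_D: "0 < t \<Longrightarrow> B t \<le> D t"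
  unfolding D_def using A_nonneg dSp by simp

lemma L_deriv:
  assumes t: "0 < t"
  shows "(L has_real_derivative - D t) (at t)"
proof -
  define f where "f s x = S x s * S x s / 2 + r x * I x s" for s x :: real
  define fx where "fx s x = S x s * F x s + r x * G x s" for s x :: real
  have "((\<lambda>s. integral (cbox a b) (f s)) has_field_derivative integral (cbox a b) (fx t)) (at t within {0<..})"
  proof (rule leibniz_rule_field_derivative)
    fix s x :: real assume s: "s \<in> {0<..}" and x: "x \<in> cbox a b"
    then have s: "0 < s" and x: "x \<in> {a..b}" by auto
    have d1: "((\<lambda>z. S x z * S x z) has_real_derivative S x s * F x s + F x s * S x s) (at s)"
      using DERIV_mult'[OF S_d[OF x s] S_d[OF x s]] .
    have d2: "((\<lambda>z. I x z) has_real_derivative G x s) (at s)" using I_d[OF s x] by (simp add: G_def)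
    have "((\<lambda>s. f s x) has_real_derivative fx s x) (at s)"
      unfolding f_def
      by (rule DERIV_cong[OF DERIV_add[OF DERIV_cdivide[OF d1, of 2] DERIV_cmult[OF d2, of "r x"]]])
         (simp add: fx_def)
    then show "((\<lambda>s. f s x) has_field_derivative fx s x) (at s within {0<..})"
      by (rule has_field_derivative_at_within)
  next
    fix s :: real assume "s \<in> {0<..}"
    then have s: "0 < s" by simp
    show "f s integrable_on cbox a b" unfolding f_def cbox_interval
      by (intro integrable_continuous_real continuous_intros sl[OF s] rc) simp
  next
    have "continuous_on ({a..b} \<times> {0<..}) (\<lambda>p. fx (snd p) (fst p))"
      unfolding fx_def by (intro continuous_intros Sc Fc Gc cont_lift_fst rc)
    from cont_swap[OF this] show "continuous_on ({0<..} \<times> cbox a b) (\<lambda>(s, x). fx s x)"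
      by simp
  qed (use t in auto)
  moreover have "integral (cbox a b) (fx t) = - D t"
  proof -
    have eq: "fx t x = dS * (S x t * Sxx x t) - \<beta> x * (S x t - r x)\<^sup>2 * I x t"
      if "x \<in> {a..b}" for x
      unfolding fx_def F_eq G_eq[OF that] by (simp add: algebra_simps power2_eq_square)
    have I0: "integral {a..b} (fx t) = integral {a..b} (\<lambda>x. dS * (S x t * Sxx x t) - \<beta> x * (S x t - r x)\<^sup>2 * I x t)"
      by (rule integral_cong) (rule eq)
    have i1: "(\<lambda>x. dS * (S x t * Sxx x t)) integrable_on {a..b}"
      by (intro integrable_continuous_real continuous_intros sl[OF t])
    have i2: "(\<lambda>x. \<beta> x * (S x t - r x)\<^sup>2 * I x t) integrable_on {a..b}"
      by (intro integrable_continuous_real continuous_intros sl[OF t] rc \<beta>c)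
    have I1: "integral {a..b} (fx t) = dS * integral {a..b} (\<lambda>x. S x t * Sxx x t) - B t"
      unfolding I0 B_def integral_diff[OF i1 i2] integral_mult_right ..
    have "integral {a..b} (\<lambda>x. Sx x t * Sx x t) = - integral {a..b} (\<lambda>x. Sxx x t * S x t)"
      by (rule ibp[OF t Sx_d[OF t] sl(1)[OF t] sl(3)[OF t]])
    then have I2: "integral {a..b} (\<lambda>x. S x t * Sxx x t) = - A t"
      unfolding A_def power2_eq_square by (simp only: mult.commute)
    show ?thesis unfolding cbox_interval I1 I2 D_def by simp
  qed
  ultimately have der: "((\<lambda>s. integral (cbox a b) (f s)) has_field_derivative - D t) (at t within {0<..})"
    by simp
  have Leq: "L = (\<lambda>s. integral (cbox a b) (f s))"
    unfolding L_def f_def cbox_interval by (rule refl)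
  have "at t within {0<..} = at t" using t by (intro at_within_open) auto
  then show ?thesis using der unfolding Leq by simp
qed

lemma D_cont: "continuous_on {0<..} D"
proof -
  have cA: "continuous_on {0<..} (\<lambda>t. integral (cbox a b) (\<lambda>x. (Sx x t)\<^sup>2))"
  proof (rule integral_continuous_on_param)
    have "continuous_on ({a..b} \<times> {0<..}) (\<lambda>p. (Sx (fst p) (snd p))\<^sup>2)"
      by (intro continuous_intros Sxc)
    from cont_swap[OF this] show "continuous_on ({0<..} \<times> cbox a b) (\<lambda>(t, x). (Sx x t)\<^sup>2)" by simp
  qed
  have cB: "continuous_on {0<..} (\<lambda>t. integral (cbox a b) (\<lambda>x. \<beta> x * (S x t - r x)\<^sup>2 * I x t))"
  proof (rule integral_continuous_on_param)
    have "continuous_on ({a..b} \<times> {0<..}) (\<lambda>p. \<beta> (fst p) * (S (fst p) (snd p) - r (fst p))\<^sup>2 * I (fst p) (snd p))"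
      by (intro continuous_intros Sc Ic cont_lift_fst \<beta>c rc)
    from cont_swap[OF this] show "continuous_on ({0<..} \<times> cbox a b) (\<lambda>(t, x). \<beta> x * (S x t - r x)\<^sup>2 * I x t)"
      by simp
  qed
  have "D = (\<lambda>t. dS * integral (cbox a b) (\<lambda>x. (Sx x t)\<^sup>2) + integral (cbox a b) (\<lambda>x. \<beta> x * (S x t - r x)\<^sup>2 * I x t))"
    unfolding D_def A_def B_def cbox_interval by (rule refl)
  then show ?thesis using cA cB by (simp add: continuous_on_add continuous_on_mult_left)
qed

lemma D_diff_le:
  assumes t1: "0 < t1" and t12: "t1 \<le> t2"
  shows "D t2 - D t1 \<le> integral {a..b} (\<lambda>x. - 2 * dS * (Sxx x t2 * (S x t2 - S x t1))
      + (\<beta> x * (S x t2 - r x)\<^sup>2 * I x t2 - \<beta> x * (S x t1 - r x)\<^sup>2 * I x t1))"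
proof -
  have t2: "0 < t2" using t1 t12 by simp
  note c1 = sl[OF t1] and c2 = sl[OF t2]
  have iA1: "(\<lambda>x. (Sx x t1)\<^sup>2) integrable_on {a..b}" by (intro integrable_continuous_real continuous_intros c1)
  have iA2: "(\<lambda>x. (Sx x t2)\<^sup>2) integrable_on {a..b}" by (intro integrable_continuous_real continuous_intros c2)
  have iX: "(\<lambda>x. 2 * (Sx x t2 * (Sx x t2 - Sx x t1))) integrable_on {a..b}"
    by (intro integrable_continuous_real continuous_intros c1 c2)
  have iY: "(\<lambda>x. Sxx x t2 * (S x t2 - S x t1)) integrable_on {a..b}"
    by (intro integrable_continuous_real continuous_intros c1 c2)
  have iB1: "(\<lambda>x. \<beta> x * (S x t1 - r x)\<^sup>2 * I x t1) integrable_on {a..b}"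
    by (intro integrable_continuous_real continuous_intros c1 \<beta>c rc)
  have iB2: "(\<lambda>x. \<beta> x * (S x t2 - r x)\<^sup>2 * I x t2) integrable_on {a..b}"
    by (intro integrable_continuous_real continuous_intros c2 \<beta>c rc)
  have "A t2 - A t1 = integral {a..b} (\<lambda>x. (Sx x t2)\<^sup>2 - (Sx x t1)\<^sup>2)"
    unfolding A_def integral_diff[OF iA2 iA1] ..
  also have "\<dots> \<le> integral {a..b} (\<lambda>x. 2 * (Sx x t2 * (Sx x t2 - Sx x t1)))"
  proof (rule integral_le)
    show "(\<lambda>x. (Sx x t2)\<^sup>2 - (Sx x t1)\<^sup>2) integrable_on {a..b}" by (rule integrable_diff[OF iA2 iA1])
    show "(\<lambda>x. 2 * (Sx x t2 * (Sx x t2 - Sx x t1))) integrable_on {a..b}" by (rule iX)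
    fix x
    have "0 \<le> (Sx x t2 - Sx x t1)\<^sup>2" by simp
    then show "(Sx x t2)\<^sup>2 - (Sx x t1)\<^sup>2 \<le> 2 * (Sx x t2 * (Sx x t2 - Sx x t1))"
      by (simp add: power2_eq_square algebra_simps)
  qed
  also have "\<dots> = 2 * integral {a..b} (\<lambda>x. Sx x t2 * (Sx x t2 - Sx x t1))"
    by (rule integral_mult_right)
  also have "integral {a..b} (\<lambda>x. Sx x t2 * (Sx x t2 - Sx x t1)) = - integral {a..b} (\<lambda>x. Sxx x t2 * (S x t2 - S x t1))"
  proof (rule ibp[OF t2])
    fix x assume x: "x \<in> {a..b}"
    show "((\<lambda>x. S x t2 - S x t1) has_real_derivative Sx x t2 - Sx x t1) (at x within {a..b})"
      by (intro DERIV_diff Sx_d x t1 t2)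
  qed (intro continuous_intros c1 c2)+
  finally have hA: "A t2 - A t1 \<le> - 2 * integral {a..b} (\<lambda>x. Sxx x t2 * (S x t2 - S x t1))" by simp
  have hB: "B t2 - B t1 = integral {a..b} (\<lambda>x. \<beta> x * (S x t2 - r x)\<^sup>2 * I x t2 - \<beta> x * (S x t1 - r x)\<^sup>2 * I x t1)"
    unfolding B_def integral_diff[OF iB2 iB1] ..
  have "integral {a..b} (\<lambda>x. - 2 * dS * (Sxx x t2 * (S x t2 - S x t1))
      + (\<beta> x * (S x t2 - r x)\<^sup>2 * I x t2 - \<beta> x * (S x t1 - r x)\<^sup>2 * I x t1))
    = - 2 * dS * integral {a..b} (\<lambda>x. Sxx x t2 * (S x t2 - S x t1)) + (B t2 - B t1)"
  proof -
    have iY2: "(\<lambda>x. - 2 * dS * (Sxx x t2 * (S x t2 - S x t1))) integrable_on {a..b}"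
      by (intro integrable_continuous_real continuous_intros c1 c2)
    show ?thesis unfolding hB integral_add[OF iY2 integrable_diff[OF iB2 iB1]] integral_mult_right ..
  qed
  moreover have "dS * (A t2 - A t1) \<le> dS * (- 2 * integral {a..b} (\<lambda>x. Sxx x t2 * (S x t2 - S x t1)))"
    using hA dSp by (simp only: mult_le_cancel_left_pos)
  ultimately show ?thesis unfolding D_def by (simp add: algebra_simps)
qed


lemma R_bound:
  assumes x: "x \<in> {a..b}" and t: "0 < t" and h: "0 < h"
    and Fn: "\<And>s. s \<in> {t..t+h} \<Longrightarrow> \<bar>F x s - F x t\<bar> \<le> \<eta> \<and> \<bar>F x s\<bar> \<le> MF"
    and Gn: "\<And>s. s \<in> {t..t+h} \<Longrightarrow> \<bar>G x s - G x t\<bar> \<le> \<eta>"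
    and w: "\<beta> x * (S x t - r x)\<^sup>2 \<le> Mw"
    and Cb: "\<beta> x * (S x t - r x) \<le> C\<beta>"
  shows "- 2 * dS * (Sxx x (t+h) * (S x (t+h) - S x t))
      + (\<beta> x * (S x (t+h) - r x)\<^sup>2 * I x (t+h) - \<beta> x * (S x t - r x)\<^sup>2 * I x t)
     \<le> h * (C\<beta> * (\<beta> x * (S x t - r x)\<^sup>2 * I x t) + (4 * MF + Mw) * \<eta>)"
proof -
  define t2 where "t2 = t + h"
  have tt2: "t < t2" using h by (simp add: t2_def)
  obtain \<xi> where \<xi>: "t < \<xi>" "\<xi> < t2" and eS: "S x t2 - S x t = (t2 - t) * F x \<xi>"
    using MVT2[OF tt2, of "\<lambda>s. S x s" "F x"] S_d[OF x] t by force
  have Id: "((\<lambda>s. I x s) has_real_derivative G x s) (at s)" if "0 < s" for s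
    using I_d[OF that x] by (simp add: G_def)
  obtain \<xi>' where \<xi>': "t < \<xi>'" "\<xi>' < t2" and eI: "I x t2 - I x t = (t2 - t) * G x \<xi>'"
    using MVT2[OF tt2, of "\<lambda>s. I x s" "G x"] Id t by force
  have ht: "t2 - t = h" by (simp add: t2_def)
  define dSS where "dSS = S x t2 - S x t"
  define w0 where "w0 = \<beta> x * (S x t - r x)\<^sup>2"
  have w0: "0 \<le> w0" unfolding w0_def using \<beta>p[OF x] by simp
  have I2: "0 \<le> I x t2" using Inn[OF x] tt2 t by simp
  have step1: "- 2 * dS * (Sxx x t2 * dSS) + (\<beta> x * (S x t2 - r x)\<^sup>2 * I x t2 - w0 * I x t)
      = - 2 * F x t2 * dSS - \<beta> x * I x t2 * dSS\<^sup>2 + w0 * (I x t2 - I x t)"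
    unfolding F_eq G_eq[OF x] dSS_def w0_def power2_eq_square by (simp add: algebra_simps)
  have "0 \<le> \<beta> x * I x t2 * dSS\<^sup>2" using \<beta>p[OF x] I2 by simp
  with step1 have s1: "- 2 * dS * (Sxx x t2 * dSS) + (\<beta> x * (S x t2 - r x)\<^sup>2 * I x t2 - w0 * I x t)
      \<le> - 2 * F x t2 * dSS + w0 * (I x t2 - I x t)" by linarith
  have F1: "\<bar>F x t\<bar> \<le> MF" using Fn[of t] h by simp
  have F2: "\<bar>F x t2 - F x t\<bar> \<le> \<eta>" "\<bar>F x t2\<bar> \<le> MF" using Fn[of t2] h by (auto simp: t2_def)
  have F\<xi>: "\<bar>F x \<xi> - F x t\<bar> \<le> \<eta>" using Fn[of \<xi>] \<xi> by (auto simp: t2_def)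
  have G\<xi>: "\<bar>G x \<xi>' - G x t\<bar> \<le> \<eta>" using Gn[of \<xi>'] \<xi>' by (auto simp: t2_def)
  have "\<bar>F x t2 * (F x \<xi> - F x t)\<bar> \<le> MF * \<eta>"
    unfolding abs_mult by (rule mult_mono[OF F2(2) F\<xi>]) (use F1 in auto)
  moreover have "\<bar>F x t * (F x t2 - F x t)\<bar> \<le> MF * \<eta>"
    unfolding abs_mult by (rule mult_mono[OF F1 F2(1)]) (use F1 in auto)
  moreover have "F x t2 * F x \<xi> - F x t * F x t = F x t2 * (F x \<xi> - F x t) + F x t * (F x t2 - F x t)"
    by (simp add: algebra_simps)
  ultimately have "- 2 * (F x t2 * F x \<xi>) \<le> - 2 * (F x t * F x t) + 4 * MF * \<eta>"
    using abs_le_D2 by linarith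
  moreover have e2: "- 2 * F x t2 * dSS = h * (- 2 * (F x t2 * F x \<xi>))"
    unfolding dSS_def eS ht by (simp add: algebra_simps)
  ultimately have s2: "- 2 * F x t2 * dSS \<le> h * (- 2 * (F x t * F x t) + 4 * MF * \<eta>)"
    unfolding e2 using h by (intro mult_left_mono) auto
  have "0 \<le> \<eta>" using F\<xi> by linarith
  have "w0 * (G x \<xi>' - G x t) \<le> w0 * \<eta>" using G\<xi> w0 by (intro mult_left_mono) (auto simp: abs_le_iff)
  also have "\<dots> \<le> Mw * \<eta>" using w \<open>0 \<le> \<eta>\<close> unfolding w0_def by (intro mult_right_mono) auto
  finally have wG: "w0 * G x \<xi>' \<le> w0 * G x t + Mw * \<eta>" by (simp add: algebra_simps)
  have "w0 * G x t = (\<beta> x * (S x t - r x)) * (\<beta> x * (S x t - r x)\<^sup>2 * I x t)"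
    unfolding w0_def G_eq[OF x] power2_eq_square by (simp add: algebra_simps)
  also have "\<dots> \<le> C\<beta> * (\<beta> x * (S x t - r x)\<^sup>2 * I x t)"
    by (rule mult_right_mono[OF Cb]) (use \<beta>p[OF x] Inn[OF x t] in simp)
  finally have "w0 * G x \<xi>' \<le> C\<beta> * (\<beta> x * (S x t - r x)\<^sup>2 * I x t) + Mw * \<eta>" using wG by linarith
  moreover have e3: "w0 * (I x t2 - I x t) = h * (w0 * G x \<xi>')"
    unfolding eI ht by (simp add: algebra_simps)
  ultimately have s3: "w0 * (I x t2 - I x t) \<le> h * (C\<beta> * (\<beta> x * (S x t - r x)\<^sup>2 * I x t) + Mw * \<eta>)"
    unfolding e3 using h by (intro mult_left_mono) auto
  have "0 \<le> h * (F x t * F x t)" using h by simp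
  moreover have "h * (- 2 * (F x t * F x t) + 4 * MF * \<eta>) + h * (C\<beta> * (\<beta> x * (S x t - r x)\<^sup>2 * I x t) + Mw * \<eta>)
     = h * (C\<beta> * (\<beta> x * (S x t - r x)\<^sup>2 * I x t) + (4 * MF + Mw) * \<eta>) - 2 * (h * (F x t * F x t))"
    by (simp add: algebra_simps)
  ultimately have "- 2 * dS * (Sxx x t2 * dSS) + (\<beta> x * (S x t2 - r x)\<^sup>2 * I x t2 - w0 * I x t)
     \<le> h * (C\<beta> * (\<beta> x * (S x t - r x)\<^sup>2 * I x t) + (4 * MF + Mw) * \<eta>)"
    using s1 s2 s3 by linarith
  then show ?thesis unfolding t2_def dSS_def w0_def .
qed


lemma D_step:
  assumes K: "\<And>x. x \<in> {a..b} \<Longrightarrow> S x 1 \<le> K \<and> r x \<le> K"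
    and Bb: "\<And>x. x \<in> {a..b} \<Longrightarrow> \<beta> x \<le> Bb"
    and t: "1 \<le> t" and e: "0 < e"
  shows "\<exists>\<delta>>0. \<forall>h. 0 < h \<and> h < \<delta> \<longrightarrow> D (t + h) - D t \<le> h * (Bb * K * B t + e)"
proof -
  have t0: "0 < t" using t by simp
  define T where "T = {a..b} \<times> {t..t+1}"
  have Tsub: "T \<subseteq> {a..b} \<times> {0<..}" using t0 by (auto simp: T_def)
  have cT: "compact T" unfolding T_def by (intro compact_Times compact_Icc)
  have FcT: "continuous_on T (\<lambda>p. F (fst p) (snd p))" by (rule continuous_on_subset[OF Fc Tsub])
  have GcT: "continuous_on T (\<lambda>p. G (fst p) (snd p))" by (rule continuous_on_subset[OF Gc Tsub])
  obtain MF where MF: "\<And>p. p \<in> T \<Longrightarrow> \<bar>F (fst p) (snd p)\<bar> \<le> MF"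
    using compact_imp_bounded[OF compact_continuous_image[OF FcT cT]] unfolding bounded_iff by auto
  have "(a, t) \<in> T" using ab by (auto simp: T_def)
  from MF[OF this] have MF0: "0 \<le> MF" by simp
  define w where "w x = \<beta> x * (S x t - r x)\<^sup>2" for x
  have wc: "continuous_on {a..b} w" unfolding w_def by (intro continuous_intros \<beta>c rc sl[OF t0])
  obtain Mw where Mw': "\<forall>y\<in>w ` {a..b}. norm y \<le> Mw"
    using compact_imp_bounded[OF compact_continuous_image[OF wc compact_Icc]] unfolding bounded_iff by blast
  have Mw: "\<bar>w x\<bar> \<le> Mw" if "x \<in> {a..b}" for x using Mw' that by auto
  have "a \<in> {a..b}" using ab by simp
  from Mw[OF this] have Mw0: "0 \<le> Mw" by simp
  define \<eta> where "\<eta> = e / ((b - a) * (4 * MF + Mw + 1))"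
  have \<eta>: "0 < \<eta>" using e ab MF0 Mw0 by (simp add: \<eta>_def)
  have \<eta>b: "(4 * MF + Mw) * \<eta> * (b - a) \<le> e"
  proof -
    define c where "c = 4 * MF + Mw + 1"
    have c: "0 < c" using MF0 Mw0 by (simp add: c_def)
    have "\<eta> * (b - a) = e / c" using ab c by (simp add: \<eta>_def c_def)
    then have "(4 * MF + Mw) * \<eta> * (b - a) = (4 * MF + Mw) * (e / c)" by (simp add: mult.assoc)
    also have "\<dots> \<le> c * (e / c)" using e c by (intro mult_right_mono) (auto simp: c_def)
    also have "\<dots> = e" using c by simp
    finally show ?thesis .
  qed
  obtain dF where dF: "0 < dF" and hdF: "\<And>p p'. p \<in> T \<Longrightarrow> p' \<in> T \<Longrightarrow> dist p' p < dF \<Longrightarrow>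
      dist (F (fst p') (snd p')) (F (fst p) (snd p)) < \<eta>"
    using compact_uniformly_continuous[OF FcT cT] \<eta> unfolding uniformly_continuous_on_def by metis
  obtain dG where dG: "0 < dG" and hdG: "\<And>p p'. p \<in> T \<Longrightarrow> p' \<in> T \<Longrightarrow> dist p' p < dG \<Longrightarrow>
      dist (G (fst p') (snd p')) (G (fst p) (snd p)) < \<eta>"
    using compact_uniformly_continuous[OF GcT cT] \<eta> unfolding uniformly_continuous_on_def by metis
  define \<delta> where "\<delta> = min 1 (min dF dG)"
  show ?thesis
  proof (intro exI[of _ \<delta>] conjI allI impI)
    show "0 < \<delta>" using dF dG by (simp add: \<delta>_def)
    fix h :: real assume h: "0 < h \<and> h < \<delta>"
    then have h0: "0 < h" and hb: "h < 1" "h < dF" "h < dG" by (auto simp: \<delta>_def)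
    have near: "(x, s) \<in> T \<and> (x, t) \<in> T \<and> dist (x, s) (x, t) < min dF dG"
      if x: "x \<in> {a..b}" and s: "s \<in> {t..t+h}" for x s
    proof -
      have "dist (x, s) (x, t) = \<bar>s - t\<bar>" by (simp add: dist_Pair_Pair dist_real_def)
      then show ?thesis using x s hb by (auto simp: T_def)
    qed
    have pt: "- 2 * dS * (Sxx x (t+h) * (S x (t+h) - S x t))
      + (\<beta> x * (S x (t+h) - r x)\<^sup>2 * I x (t+h) - \<beta> x * (S x t - r x)\<^sup>2 * I x t)
     \<le> h * (Bb * K * (\<beta> x * (S x t - r x)\<^sup>2 * I x t) + (4 * MF + Mw) * \<eta>)"
      if x: "x \<in> {a..b}" for x
    proof (rule R_bound[OF x t0 h0])
      fix s assume s: "s \<in> {t..t+h}"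
      from near[OF x s] have n: "(x, s) \<in> T" "(x, t) \<in> T" "dist (x, s) (x, t) < dF" "dist (x, s) (x, t) < dG"
        by auto
      have "dist (F x s) (F x t) < \<eta>" using hdF[OF n(2) n(1) n(3)] by simp
      moreover have "\<bar>F x s\<bar> \<le> MF" using MF[OF n(1)] by simp
      ultimately show "\<bar>F x s - F x t\<bar> \<le> \<eta> \<and> \<bar>F x s\<bar> \<le> MF" by (simp add: dist_real_def)
      have "dist (G x s) (G x t) < \<eta>" using hdG[OF n(2) n(1) n(4)] by simp
      then show "\<bar>G x s - G x t\<bar> \<le> \<eta>" by (simp add: dist_real_def)
    next
      show "\<beta> x * (S x t - r x)\<^sup>2 \<le> Mw" using Mw[OF x] unfolding w_def by simp
    next
      have SK: "S x t \<le> K" by (rule max_principle[OF K x t])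
      have rp: "0 < r x" by (rule r_pos[OF x])
      have bp: "0 < \<beta> x" "\<beta> x \<le> Bb" using \<beta>p[OF x] Bb[OF x] by auto
      have K0: "0 < K" using K[OF x] rp by simp
      show "\<beta> x * (S x t - r x) \<le> Bb * K"
      proof (cases "S x t - r x \<le> 0")
        case True
        then have "\<beta> x * (S x t - r x) \<le> 0" using bp by (simp add: mult_nonneg_nonpos)
        moreover have "0 \<le> Bb * K" using bp K0 by simp
        ultimately show ?thesis by linarith
      next
        case False
        then have "\<beta> x * (S x t - r x) \<le> Bb * (S x t - r x)" using bp by (intro mult_right_mono) auto
        also have "\<dots> \<le> Bb * K" using SK rp bp by (intro mult_left_mono) auto
        finally show ?thesis .
      qed
    qed
    have "D (t + h) - D t \<le> integral {a..b} (\<lambda>x. - 2 * dS * (Sxx x (t+h) * (S x (t+h) - S x t))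
      + (\<beta> x * (S x (t+h) - r x)\<^sup>2 * I x (t+h) - \<beta> x * (S x t - r x)\<^sup>2 * I x t))"
      by (rule D_diff_le[OF t0]) (use h0 in simp)
    also have "\<dots> \<le> integral {a..b} (\<lambda>x. h * (Bb * K * (\<beta> x * (S x t - r x)\<^sup>2 * I x t) + (4 * MF + Mw) * \<eta>))"
    proof (rule integral_le)
      have th: "0 < t + h" using t0 h0 by simp
      show "(\<lambda>x. - 2 * dS * (Sxx x (t+h) * (S x (t+h) - S x t))
        + (\<beta> x * (S x (t+h) - r x)\<^sup>2 * I x (t+h) - \<beta> x * (S x t - r x)\<^sup>2 * I x t)) integrable_on {a..b}"
        by (intro integrable_continuous_real continuous_intros sl[OF t0] sl[OF th] \<beta>c rc)
      show "(\<lambda>x. h * (Bb * K * (\<beta> x * (S x t - r x)\<^sup>2 * I x t) + (4 * MF + Mw) * \<eta>)) integrable_on {a..b}"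
        by (intro integrable_continuous_real continuous_intros sl[OF t0] \<beta>c rc)
    qed (rule pt)
    also have "\<dots> = h * (Bb * K * B t + (4 * MF + Mw) * \<eta> * (b - a))"
    proof -
      have i1: "(\<lambda>x. Bb * K * (\<beta> x * (S x t - r x)\<^sup>2 * I x t)) integrable_on {a..b}"
        by (intro integrable_continuous_real continuous_intros sl[OF t0] \<beta>c rc)
      have i2: "(\<lambda>x. (4 * MF + Mw) * \<eta>) integrable_on {a..b}" by (rule integrable_const_ivl)
      show ?thesis unfolding integral_mult_right integral_add[OF i1 i2] B_def
        using ab by (simp add: algebra_simps)
    qed
    also have "\<dots> \<le> h * (Bb * K * B t + e)" using \<eta>b h0 by (intro mult_left_mono) auto
    finally show "D (t + h) - D t \<le> h * (Bb * K * B t + e)" .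
  qed
qed


lemma bound_on_ab:
  fixes f :: "real \<Rightarrow> real"
  assumes "continuous_on {a..b} f"
  obtains M where "\<And>x. x \<in> {a..b} \<Longrightarrow> \<bar>f x\<bar> \<le> M" "0 \<le> M"
proof -
  obtain M where M': "\<forall>y\<in>f ` {a..b}. norm y \<le> M"
    using compact_imp_bounded[OF compact_continuous_image[OF assms compact_Icc]] unfolding bounded_iff by blast
  have M: "\<bar>f x\<bar> \<le> M" if "x \<in> {a..b}" for x using M' that by auto
  have "a \<in> {a..b}" using ab by simp
  from M[OF this] have "0 \<le> M" by simp
  with M show ?thesis using that by blast
qed

lemma L_mono: assumes "0 < s" "s \<le> u" shows "L u \<le> L s"
proof (cases "s = u")
  case False
  then have su: "s < u" using assms by simp
  obtain z where z: "s < z" "z < u" and eq: "L u - L s = (u - s) * (- D z)"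
    using MVT2[OF su, of L "\<lambda>z. - D z"] L_deriv assms by force
  have "0 \<le> D z" using D_nonneg z assms by simp
  then have "(u - s) * (- D z) \<le> 0" using su by (simp add: mult_nonneg_nonpos)
  then show ?thesis using eq by simp
qed simp

lemma D_tendsto: "(D \<longlongrightarrow> 0) at_top"
proof -
  obtain M1 where M1: "\<And>x. x \<in> {a..b} \<Longrightarrow> \<bar>S x 1\<bar> \<le> M1" "0 \<le> M1"
    using bound_on_ab[OF sl(1)[of 1]] by auto
  obtain M2 where M2: "\<And>x. x \<in> {a..b} \<Longrightarrow> \<bar>r x\<bar> \<le> M2" "0 \<le> M2"
    using bound_on_ab[OF rc] by auto
  obtain Bb where Bb: "\<And>x. x \<in> {a..b} \<Longrightarrow> \<bar>\<beta> x\<bar> \<le> Bb" "0 \<le> Bb"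
    using bound_on_ab[OF \<beta>c] by auto
  define K where "K = M1 + M2"
  have K: "S x 1 \<le> K \<and> r x \<le> K" if "x \<in> {a..b}" for x
    using M1(1)[OF that] M2(1)[OF that] M1(2) M2(2) unfolding K_def by (auto simp: abs_le_iff)
  have K0: "0 \<le> K" using M1(2) M2(2) by (simp add: K_def)
  have Bb': "\<beta> x \<le> Bb" if "x \<in> {a..b}" for x using Bb(1)[OF that] by (simp add: abs_le_iff)
  define C where "C = Bb * K"
  have C0: "0 \<le> C" using Bb(2) K0 by (simp add: C_def)
  define g where "g t = D t + C * L t" for t
  have Lc: "continuous_on {1..} L"
  proof (intro continuous_at_imp_continuous_on ballI)
    fix x :: real assume "x \<in> {1..}"
    then have "0 < x" by simp
    from DERIV_isCont[OF L_deriv[OF this]] show "isCont L x" .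
  qed
  have gc: "continuous_on {1..} g" unfolding g_def
    by (intro continuous_intros Lc continuous_on_subset[OF D_cont]) auto
  have gd: "\<exists>\<delta>>0. \<forall>h. 0 < h \<and> h < \<delta> \<longrightarrow> g (t + h) \<le> g t + e * h" if t: "1 \<le> t" and e: "0 < e" for t e
  proof -
    have t0: "0 < t" using t by simp
    obtain d1 where d1: "0 < d1" and h1: "\<forall>h. 0 < h \<and> h < d1 \<longrightarrow> D (t + h) - D t \<le> h * (Bb * K * B t + e / 2)"
      using D_step[OF K Bb' t, of "e / 2"] e by auto
    define e' where "e' = e / (2 * (C + 1))"
    have e': "0 < e'" using e C0 by (simp add: e'_def)
    have Ce': "C * e' \<le> e / 2"
    proof -
      have "C * e' \<le> (C + 1) * e'" using e' by simp
      also have "\<dots> = e / 2" using C0 by (simp add: e'_def field_simps)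
      finally show ?thesis .
    qed
    obtain d2 where d2: "0 < d2" and h2: "\<forall>h. 0 < h \<and> h < d2 \<longrightarrow> L (t + h) \<le> L t + h * (- D t + e')"
      using deriv_right_bound[OF L_deriv[OF t0] e'] by auto
    show ?thesis
    proof (intro exI[of _ "min d1 d2"] conjI allI impI)
      show "0 < min d1 d2" using d1 d2 by simp
      fix h assume h: "0 < h \<and> h < min d1 d2"
      have a1: "D (t + h) - D t \<le> h * (C * B t + e / 2)" using h1 h by (simp add: C_def)
      have "C * L (t + h) \<le> C * (L t + h * (- D t + e'))" using h2 h C0 by (intro mult_left_mono) auto
      then have a2: "C * L (t + h) \<le> C * L t - h * (C * D t) + h * (C * e')" by (simp add: algebra_simps)
      have a3: "h * (C * B t) \<le> h * (C * D t)" using B_le_D[OF t0] C0 h by (intro mult_left_mono) auto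
      have a4: "h * (C * e') \<le> h * (e / 2)" using Ce' h by (intro mult_left_mono) auto
      have a5: "h * (C * B t + e / 2) = h * (C * B t) + h * (e / 2)" by (simp add: algebra_simps)
      have a6: "e * h = h * (e / 2) + h * (e / 2)" by (simp add: algebra_simps)
      show "g (t + h) \<le> g t + e * h" unfolding g_def using a1 a2 a3 a4 a5 a6 by linarith
    qed
  qed
  have gmono: "g u \<le> g s" if "1 \<le> s" "s \<le> u" for s u
    by (rule dini_mono[OF gc gd that])
  define l where "l = Inf (L ` {1..})"
  have Lb: "bdd_below (L ` {1..})"
  proof (rule bdd_belowI)
    fix y assume "y \<in> L ` {1..}"
    then obtain x where "x \<in> {1..}" "y = L x" by blast
    then show "0 \<le> y" using L_nonneg[of x] by simp
  qed
  have Ll: "l \<le> L t" if "1 \<le> t" for t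
  proof -
    have "L t \<in> L ` {1..}" using that by simp
    then show ?thesis unfolding l_def by (rule cInf_lower[OF _ Lb])
  qed
  have diff0: "((\<lambda>t. L (t - 1) - L t) \<longlongrightarrow> 0) at_top"
  proof (rule tendstoI)
    fix \<epsilon> :: real assume \<epsilon>: "0 < \<epsilon>"
    have "Inf (L ` {1..}) < l + \<epsilon>" unfolding l_def[symmetric] using \<epsilon> by linarith
    moreover have "L ` {1..} \<noteq> {}" by auto
    ultimately have "\<exists>y\<in>L ` {1..}. y < l + \<epsilon>" by (rule cInf_lessD[rotated])
    then obtain T0 where T0: "T0 \<in> {1..}" "L T0 < l + \<epsilon>" by blast
    show "\<forall>\<^sub>F t in at_top. dist (L (t - 1) - L t) 0 < \<epsilon>"
      unfolding eventually_at_top_linorder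
    proof (intro exI[of _ "T0 + 1"] allI impI)
      fix t assume t: "T0 + 1 \<le> t"
      have "L (t - 1) \<le> L T0" using T0 t by (intro L_mono) auto
      moreover have "l \<le> L t" using T0 t by (intro Ll) auto
      moreover have "L t \<le> L (t - 1)" using T0 t by (intro L_mono) auto
      ultimately show "dist (L (t - 1) - L t) 0 < \<epsilon>" using T0 by (simp add: dist_real_def)
    qed
  qed
  have bound: "D t \<le> (1 + C) * (L (t - 1) - L t)" if t: "2 \<le> t" for t
  proof -
    have tt: "t - 1 < t" by simp
    have dd: "\<And>x. t - 1 \<le> x \<Longrightarrow> x \<le> t \<Longrightarrow> (L has_real_derivative - D x) (at x)"
      using L_deriv t by simp
    obtain z where z: "t - 1 < z" "z < t" and eq: "L t - L (t - 1) = (t - (t - 1)) * (- D z)"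
      using MVT2[OF tt dd] by blast
    have Dz: "D z = L (t - 1) - L t" using eq by simp
    have "g t \<le> g z" using z t by (intro gmono) auto
    then have "D t \<le> D z + C * (L z - L t)" unfolding g_def by (simp add: algebra_simps)
    moreover have "C * (L z - L t) \<le> C * (L (t - 1) - L t)"
      using C0 z t by (intro mult_left_mono) (auto intro!: L_mono)
    ultimately show ?thesis using Dz by (simp add: algebra_simps)
  qed
  show ?thesis
  proof (rule tendsto_sandwich[of "\<lambda>_. 0" _ _ "\<lambda>t. (1 + C) * (L (t - 1) - L t)"])
    show "\<forall>\<^sub>F t in at_top. 0 \<le> D t"
      unfolding eventually_at_top_linorder by (intro exI[of _ 1] allI impI D_nonneg) auto
    show "\<forall>\<^sub>F t in at_top. D t \<le> (1 + C) * (L (t - 1) - L t)"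
      unfolding eventually_at_top_linorder by (intro exI[of _ 2] allI impI bound)
    show "((\<lambda>t. (1 + C) * (L (t - 1) - L t)) \<longlongrightarrow> 0) at_top"
      using tendsto_mult_left[OF diff0, of "1 + C"] by simp
  qed simp
qed

end


theorem lemma3p10:
  fixes a b dS N :: real
    and \<beta> \<gamma> S0 I0 :: "real \<Rightarrow> real"
    and S I :: "real \<Rightarrow> real \<Rightarrow> real"
  assumes "a < b"
    and "hoelder_cont_on {a..b} \<beta>" "hoelder_cont_on {a..b} \<gamma>"
    and "\<forall>x\<in>{a..b}. \<beta> x > 0" "\<forall>x\<in>{a..b}. \<gamma> x > 0"
    and "continuous_on {a..b} S0" "continuous_on {a..b} I0"
    and "\<forall>x\<in>{a..b}. S0 x \<ge> 0 \<and> I0 x \<ge> 0"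
    and "\<exists>x\<in>{a..b}. I0 x \<noteq> 0"
    and "integral {a<..<b} (\<lambda>x. S0 x + I0 x) = N" and "N > 0"
    and "dS > 0"
    and "SIS_solution a b dS \<beta> \<gamma> S0 I0 S I"
  shows "((\<lambda>t. sqrt (integral {a<..<b} (\<lambda>x. (deriv (\<lambda>y. S y t) x)\<^sup>2))) \<longlongrightarrow> 0) at_top \<and>
         ((\<lambda>t. integral {a<..<b} (\<lambda>x. \<beta> x * (S x t - \<gamma> x / \<beta> x)\<^sup>2 * I x t)) \<longlongrightarrow> 0) at_top"
proof -
  note as = assms
  from as(13) have sol: "continuous_on ({a..b} \<times> {0..}) (\<lambda>(x,t). S x t)"
     "continuous_on ({a..b} \<times> {0..}) (\<lambda>(x,t). I x t)"
     "\<forall>x\<in>{a..b}. \<forall>t\<ge>0. S x t \<ge> 0 \<and> I x t \<ge> 0"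
    unfolding SIS_solution_def by auto
  from as(13) obtain Sx Sxx St where
    c1: "continuous_on ({a..b} \<times> {0<..}) (\<lambda>(x,t). Sx x t)" and
    c2: "continuous_on ({a..b} \<times> {0<..}) (\<lambda>(x,t). Sxx x t)" and
    d1: "\<forall>t>0. \<forall>x\<in>{a..b}.
           ((\<lambda>y. S y t) has_real_derivative Sx x t) (at x within {a..b}) \<and>
           ((\<lambda>y. Sx y t) has_real_derivative Sxx x t) (at x within {a..b})" and
    d2: "\<forall>t>0. \<forall>x\<in>{a<..<b}.
           ((\<lambda>s. S x s) has_real_derivative St x t) (at t) \<and>
           St x t = dS * Sxx x t - \<beta> x * S x t * I x t + \<gamma> x * I x t" and
    nb: "\<forall>t>0. Sx a t = 0 \<and> Sx b t = 0" and
    d3: "\<forall>t>0. \<forall>x\<in>{a..b}.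
        ((\<lambda>s. I x s) has_real_derivative (\<beta> x * S x t * I x t - \<gamma> x * I x t)) (at t)"
    unfolding SIS_solution_def by blast
  have sub: "{a..b} \<times> {0<..} \<subseteq> {a..b} \<times> {0::real..}" by auto
  interpret sis a b dS \<beta> \<gamma> S I Sx Sxx
  proof
    show "a < b" by (rule as(1))
    show "0 < dS" by (rule as(12))
    show "continuous_on {a..b} \<beta>" by (rule hoelder_cont[OF as(2)])
    show "continuous_on {a..b} \<gamma>" by (rule hoelder_cont[OF as(3)])
    show "\<And>x. x \<in> {a..b} \<Longrightarrow> 0 < \<beta> x" using as(4) by blast
    show "\<And>x. x \<in> {a..b} \<Longrightarrow> 0 < \<gamma> x" using as(5) by blast
    show "continuous_on ({a..b} \<times> {0<..}) (\<lambda>p. S (fst p) (snd p))"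
      using continuous_on_subset[OF sol(1) sub] by (simp add: case_prod_beta)
    show "continuous_on ({a..b} \<times> {0<..}) (\<lambda>p. I (fst p) (snd p))"
      using continuous_on_subset[OF sol(2) sub] by (simp add: case_prod_beta)
    show "continuous_on ({a..b} \<times> {0<..}) (\<lambda>p. Sx (fst p) (snd p))"
      using c1 by (simp add: case_prod_beta)
    show "continuous_on ({a..b} \<times> {0<..}) (\<lambda>p. Sxx (fst p) (snd p))"
      using c2 by (simp add: case_prod_beta)
    show "\<And>x t. x \<in> {a..b} \<Longrightarrow> 0 < t \<Longrightarrow> 0 \<le> I x t" using sol(3) by auto
    show "\<And>x t. 0 < t \<Longrightarrow> x \<in> {a..b} \<Longrightarrow> ((\<lambda>y. S y t) has_real_derivative Sx x t) (at x within {a..b})"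
      using d1 by blast
    show "\<And>x t. 0 < t \<Longrightarrow> x \<in> {a..b} \<Longrightarrow> ((\<lambda>y. Sx y t) has_real_derivative Sxx x t) (at x within {a..b})"
      using d1 by blast
    show "\<And>x t. 0 < t \<Longrightarrow> x \<in> {a<..<b} \<Longrightarrow>
        ((\<lambda>s. S x s) has_real_derivative (dS * Sxx x t - \<beta> x * S x t * I x t + \<gamma> x * I x t)) (at t)"
      using d2 by metis
    show "\<And>t. 0 < t \<Longrightarrow> Sx a t = 0 \<and> Sx b t = 0" using nb by blast
    show "\<And>x t. 0 < t \<Longrightarrow> x \<in> {a..b} \<Longrightarrow>
        ((\<lambda>s. I x s) has_real_derivative (\<beta> x * S x t * I x t - \<gamma> x * I x t)) (at t)"
      using d3 by blast
  qed
  have D0: "(D \<longlongrightarrow> 0) at_top" by (rule D_tendsto)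
  have evpos: "\<forall>\<^sub>F t in at_top. (0::real) < t" by (rule eventually_gt_at_top)
  have A0: "(A \<longlongrightarrow> 0) at_top"
  proof (rule tendsto_sandwich[of "\<lambda>_. 0" _ _ "\<lambda>t. D t / dS"])
    show "\<forall>\<^sub>F t in at_top. 0 \<le> A t" using evpos by eventually_elim (rule A_nonneg)
    show "\<forall>\<^sub>F t in at_top. A t \<le> D t / dS" using evpos
    proof eventually_elim
      case (elim t)
      have "dS * A t \<le> D t" using B_nonneg[OF elim] by (simp add: D_def)
      then show ?case using dSp by (simp add: pos_le_divide_eq mult.commute)
    qed
    show "((\<lambda>t. D t / dS) \<longlongrightarrow> 0) at_top" using tendsto_divide[OF D0 tendsto_const[of dS]] dSp by simp
  qed simp
  have B0: "(B \<longlongrightarrow> 0) at_top"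
  proof (rule tendsto_sandwich[of "\<lambda>_. 0" _ _ D])
    show "\<forall>\<^sub>F t in at_top. 0 \<le> B t" using evpos by eventually_elim (rule B_nonneg)
    show "\<forall>\<^sub>F t in at_top. B t \<le> D t" using evpos by eventually_elim (rule B_le_D)
  qed (use D0 in simp_all)
  have eq1: "\<forall>\<^sub>F t in at_top. sqrt (A t) = sqrt (integral {a<..<b} (\<lambda>x. (deriv (\<lambda>y. S y t) x)\<^sup>2))"
    using evpos
  proof eventually_elim
    case (elim t)
    have "integral {a<..<b} (\<lambda>x. (deriv (\<lambda>y. S y t) x)\<^sup>2) = integral {a<..<b} (\<lambda>x. (Sx x t)\<^sup>2)"
    proof (rule integral_cong)
      fix x assume x: "x \<in> {a<..<b}"
      then have "((\<lambda>y. S y t) has_real_derivative Sx x t) (at x within {a..b})" using Sx_d[OF elim] by auto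
      moreover have "at x within {a..b} = at x" using x by (intro at_within_Icc_at) auto
      ultimately have "((\<lambda>y. S y t) has_real_derivative Sx x t) (at x)" by simp
      then show "(deriv (\<lambda>y. S y t) x)\<^sup>2 = (Sx x t)\<^sup>2" by (simp add: DERIV_imp_deriv)
    qed
    then show ?case unfolding A_def integral_open_interval_real by simp
  qed
  have eq2: "\<forall>\<^sub>F t in at_top. B t = integral {a<..<b} (\<lambda>x. \<beta> x * (S x t - \<gamma> x / \<beta> x)\<^sup>2 * I x t)"
    by (intro always_eventually allI) (simp add: B_def r_def integral_open_interval_real)
  have "((\<lambda>t. sqrt (A t)) \<longlongrightarrow> sqrt 0) at_top" by (rule tendsto_real_sqrt[OF A0])
  then have c1: "((\<lambda>t. sqrt (integral {a<..<b} (\<lambda>x. (deriv (\<lambda>y. S y t) x)\<^sup>2))) \<longlongrightarrow> 0) at_top"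
    using Lim_transform_eventually[OF _ eq1] by simp
  have c2: "((\<lambda>t. integral {a<..<b} (\<lambda>x. \<beta> x * (S x t - \<gamma> x / \<beta> x)\<^sup>2 * I x t)) \<longlongrightarrow> 0) at_top"
    using Lim_transform_eventually[OF B0 eq2] .
  show ?thesis using c1 c2 by simp
qed

end
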